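(* Fix a horizon $T\ge 1$. Consider a discrete-time system with control inputs $u=(u_0,\dots,u_{T-1})$, exogenous inputs $\delta=(\delta_0,\dots,\delta_T)$, and state $x_t=(x^{\rm aff}_t,x^{\rm cvx}_t)$, $t=0,\dots,T$, where the initial state is $x_0=f_0(\delta_0)$ for some mapping $f_0$, and for $t=1,\dots,T$ \[ x^{\rm aff}_t = A_t(\delta_t)x^{\rm aff}_{t-1}+B_t(\delta_t)u_{t-1}+w_t(\delta_t),\qquad x^{\rm cvx}_t = h_t(x^{\rm aff}_{t-1},x^{\rm cvx}_{t-1},u_{t-1},\delta_t), \] with $A_t(\delta_t),B_t(\delta_t)$ matrices, $w_t(\delta_t)$ vectors and $h_t$ vector-valued mappings. Let $x=\phi(u,\delta)$ denote the resulting state trajectory $(x_0,\dots,x_T)$, obtained by iterating the dynamics. Let $c_0,\dots,c_J$ be scalar-valued functions $c_j(x,u,\delta)$ that are convex in $(x,u)$ for every $\delta$. Suppose that for every $\delta$: (1) for $t=1,\dots,T$, each component (row) of $h_t$ is (a) jointly convex in $(x^{\rm aff}_{t-1},x^{\rm cvx}_{t-1},u_{t-1})$ and (b) nondecreasing in each element of $x^{\rm cvx}_{t-1}$; (2) for $j=0,\dots,J$, the function $(x^{\rm aff},x^{\rm cvx},u)\mapsto c_j((x^{\rm aff},x^{\rm cvx}),u,\delta)$ is nondecreasing in each element of $x^{\rm cvx}=(x^{\rm cvx}_0,\dots,x^{\rm cvx}_T)$. Then the system is a convex system, i.e., for every $\delta$ and every $j=0,\dots,J$, the function $u\mapsto c_j(\phi(u,\delta),u,\delta)$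 is convex.
   Context: Here $c_0$ plays the role of a cost and $c_1,\dots,c_J$ of constraint functions ($c_j\le 0$). A system with dynamics giving input-state map $\phi$, cost $c_0$ and constraints $c_1,\dots,c_J$ is called a convex system if $u\mapsto c_j(\phi(u,\delta),u,\delta)$ is convex for all $\delta$ and all $j=0,\dots,J$. The trajectory notation $x^{\rm aff}=(x^{\rm aff}_0,\dots,x^{\rm aff}_T)$ is used; all functions are finite-valued on the relevant domains. *)

theory Defs
  imports "HOL-Analysis.Analysis"
begin

text \<open>Time-indexed trajectories are modelled as functions nat => vector.
  Only the indices relevant for the horizon T matter.
  Convex combinations of trajectories are taken pointwise.\<close>

definition seq_comb :: "real \<Rightarrow> (nat \<Rightarrow> 'a::real_vector) \<Rightarrow> (nat \<Rightarrow> 'a) \<Rightarrow> nat \<Rightarrow> 'a" where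
  "seq_comb \<theta> u v = (\<lambda>t. \<theta> *\<^sub>R u t + (1 - \<theta>) *\<^sub>R v t)"

definition seq_convex :: "((nat \<Rightarrow> 'a::real_vector) \<Rightarrow> real) \<Rightarrow> bool" where
  "seq_convex F \<longleftrightarrow> (\<forall>u v \<theta>. 0 \<le> \<theta> \<longrightarrow> \<theta> \<le> 1 \<longrightarrow>
      F (seq_comb \<theta> u v) \<le> \<theta> * F u + (1 - \<theta>) * F v)"

definition seq_convex2 :: "((nat \<Rightarrow> 'a::real_vector) \<Rightarrow> (nat \<Rightarrow> 'b::real_vector) \<Rightarrow> real) \<Rightarrow> bool" where
  "seq_convex2 F \<longleftrightarrow> (\<forall>x u y v \<theta>. 0 \<le> \<theta> \<longrightarrow> \<theta> \<le> 1 \<longrightarrow>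
      F (seq_comb \<theta> x y) (seq_comb \<theta> u v) \<le> \<theta> * F x u + (1 - \<theta>) * F y v)"

definition vupd :: "real^'n \<Rightarrow> 'n \<Rightarrow> real \<Rightarrow> real^'n" where
  "vupd z i a = (\<chi> k. if k = i then a else z $ k)"

definition traj_upd_cvx ::
  "(nat \<Rightarrow> (real^'na) \<times> (real^'nc)) \<Rightarrow> nat \<Rightarrow> 'nc \<Rightarrow> real \<Rightarrow> nat \<Rightarrow> (real^'na) \<times> (real^'nc)" where
  "traj_upd_cvx x t i a = x(t := (fst (x t), vupd (snd (x t)) i a))"

fun dyn ::
  "('d \<Rightarrow> (real^'na) \<times> (real^'nc))
   \<Rightarrow> (nat \<Rightarrow> 'd \<Rightarrow> real^'na^'na) \<Rightarrow> (nat \<Rightarrow> 'd \<Rightarrow> real^'m^'na) \<Rightarrow> (nat \<Rightarrow> 'd \<Rightarrow> real^'na)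
   \<Rightarrow> (nat \<Rightarrow> real^'na \<Rightarrow> real^'nc \<Rightarrow> real^'m \<Rightarrow> 'd \<Rightarrow> real^'nc)
   \<Rightarrow> (nat \<Rightarrow> real^'m) \<Rightarrow> (nat \<Rightarrow> 'd) \<Rightarrow> nat \<Rightarrow> (real^'na) \<times> (real^'nc)" where
  "dyn f0 A B w h u \<delta> 0 = f0 (\<delta> 0)"
| "dyn f0 A B w h u \<delta> (Suc t) =
     (let xa = fst (dyn f0 A B w h u \<delta> t); xc = snd (dyn f0 A B w h u \<delta> t) in
       (A (Suc t) (\<delta> (Suc t)) *v xa + B (Suc t) (\<delta> (Suc t)) *v u t + w (Suc t) (\<delta> (Suc t)),
        h (Suc t) xa xc (u t) (\<delta> (Suc t))))"

text \<open>The input-state map phi: the trajectory (x_0,...,x_T); entries beyond the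
  horizon T are fixed to 0 by convention.\<close>
definition phi ::
  "nat \<Rightarrow> ('d \<Rightarrow> (real^'na) \<times> (real^'nc))
   \<Rightarrow> (nat \<Rightarrow> 'd \<Rightarrow> real^'na^'na) \<Rightarrow> (nat \<Rightarrow> 'd \<Rightarrow> real^'m^'na) \<Rightarrow> (nat \<Rightarrow> 'd \<Rightarrow> real^'na)
   \<Rightarrow> (nat \<Rightarrow> real^'na \<Rightarrow> real^'nc \<Rightarrow> real^'m \<Rightarrow> 'd \<Rightarrow> real^'nc)
   \<Rightarrow> (nat \<Rightarrow> real^'m) \<Rightarrow> (nat \<Rightarrow> 'd) \<Rightarrow> nat \<Rightarrow> (real^'na) \<times> (real^'nc)" where
  "phi T f0 A B w h u \<delta> = (\<lambda>t. if t \<le> T then dyn f0 A B w h u \<delta> t else 0)"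

definition convex_system where
  "convex_system T J f0 A B w h c \<longleftrightarrow>
     (\<forall>\<delta>. \<forall>j\<le>J. seq_convex (\<lambda>u. c j (phi T f0 A B w h u \<delta>) u \<delta>))"

end

theory Submission
  imports Defs
begin

lemma vec_mono_aux:
  fixes f :: "real^'n \<Rightarrow> real"
  assumes mono: "\<And>z i a b. a \<le> b \<Longrightarrow> f (vupd z i a) \<le> f (vupd z i b)"
    and le: "\<And>i. z $ i \<le> z' $ i"
    and fin: "finite S"
  shows "f z \<le> f (\<chi> k. if k \<in> S then z' $ k else z $ k)"
  using fin
proof (induction S rule: finite_induct)
  case empty
  then show ?case by simp
next
  case (insert i S)
  let ?m = "\<lambda>S. (\<chi> k. if k \<in> S then z' $ k else z $ k) :: real^'n"
  have e1: "?m S = vupd (?m S) i (z $ i)" using insert(2)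
    by (auto simp: vupd_def vec_eq_iff)
  have e2: "?m (insert i S) = vupd (?m S) i (z' $ i)"
    by (auto simp: vupd_def vec_eq_iff)
  have "f (?m S) \<le> f (?m (insert i S))"
    using mono[OF le[of i], of "?m S" i] e1 e2 by simp
  then show ?case using insert(3) by simp
qed

lemma vec_mono:
  fixes f :: "real^'n \<Rightarrow> real"
  assumes mono: "\<And>z i a b. a \<le> b \<Longrightarrow> f (vupd z i a) \<le> f (vupd z i b)"
    and le: "\<And>i. z $ i \<le> z' $ i"
  shows "f z \<le> f z'"
proof -
  have "f z \<le> f (\<chi> k. if k \<in> UNIV then z' $ k else z $ k)"
    by (rule vec_mono_aux[where f=f]) (use mono le in auto)
  then show ?thesis by simp
qed

lemma traj_mono:
  fixes g :: "(nat \<Rightarrow> (real^'na) \<times> (real^'nc)) \<Rightarrow> real"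
  assumes mono: "\<And>x t i a b. t \<le> T \<Longrightarrow> a \<le> b \<Longrightarrow>
         g (traj_upd_cvx x t i a) \<le> g (traj_upd_cvx x t i b)"
    and fst_eq: "\<And>t. t \<le> T \<Longrightarrow> fst (z t) = fst (x' t)"
    and snd_le: "\<And>t k. t \<le> T \<Longrightarrow> snd (z t) $ k \<le> snd (x' t) $ k"
    and out: "\<And>t. t > T \<Longrightarrow> z t = x' t"
  shows "g z \<le> g x'"
proof -
  let ?m = "\<lambda>S t. if t \<in> S then x' t else z t"
  have step: "finite S \<Longrightarrow> S \<subseteq> {..T} \<Longrightarrow> g z \<le> g (?m S)" for S
  proof (induction S rule: finite_induct)
    case empty
    then show ?case by simp
  next
    case (insert t S)
    have tT: "t \<le> T" using insert by auto
    define F where "F = (\<lambda>vec. g ((?m S)(t := (fst (x' t), vec))))"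
    have Fm: "F (vupd zz i a) \<le> F (vupd zz i b)" if "a \<le> b" for zz i a b
    proof -
      have "\<And>a. (?m S)(t := (fst (x' t), vupd zz i a))
          = traj_upd_cvx ((?m S)(t := (fst (x' t), zz))) t i a"
        by (simp add: traj_upd_cvx_def)
      then show ?thesis unfolding F_def using mono[OF tT that] by simp
    qed
    have "F (snd (z t)) \<le> F (snd (x' t))"
      by (rule vec_mono[where f=F]) (use Fm snd_le tT in auto)
    moreover have "F (snd (z t)) = g (?m S)"
    proof -
      have "(?m S)(t := (fst (x' t), snd (z t))) = ?m S"
        using insert(2) fst_eq[OF tT] by (auto simp: fun_eq_iff prod_eq_iff)
      then show ?thesis unfolding F_def by simp
    qed
    moreover have "F (snd (x' t)) = g (?m (insert t S))"
    proof -
      have "(?m S)(t := (fst (x' t), snd (x' t))) = ?m (insert t S)"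
        by (auto simp: fun_eq_iff)
      then show ?thesis unfolding F_def by simp
    qed
    ultimately show ?case using insert by simp
  qed
  have "g z \<le> g (?m {..T})" by (rule step) auto
  moreover have "?m {..T} = x'" using out by (auto simp: fun_eq_iff not_le)
  ultimately show ?thesis by simp
qed

theorem theorem1:
  fixes T J :: nat
    and f0 :: "'d \<Rightarrow> (real^'na) \<times> (real^'nc)"
    and A :: "nat \<Rightarrow> 'd \<Rightarrow> real^'na^'na"
    and B :: "nat \<Rightarrow> 'd \<Rightarrow> real^'m^'na"
    and w :: "nat \<Rightarrow> 'd \<Rightarrow> real^'na"
    and h :: "nat \<Rightarrow> real^'na \<Rightarrow> real^'nc \<Rightarrow> real^'m \<Rightarrow> 'd \<Rightarrow> real^'nc"
    and c :: "nat \<Rightarrow> (nat \<Rightarrow> (real^'na) \<times> (real^'nc)) \<Rightarrow> (nat \<Rightarrow> real^'m) \<Rightarrow> (nat \<Rightarrow> 'd) \<Rightarrow> real"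
  assumes T: "T \<ge> 1"
    and c_convex: "\<And>\<delta> j. j \<le> J \<Longrightarrow> seq_convex2 (\<lambda>x u. c j x u \<delta>)"
    and h_convex: "\<And>\<delta> t k. 1 \<le> t \<Longrightarrow> t \<le> T \<Longrightarrow>
         convex_on UNIV (\<lambda>(xa, xc, v). h t xa xc v (\<delta> t) $ k)"
    and h_mono: "\<And>\<delta> t k xa xc v i a b. 1 \<le> t \<Longrightarrow> t \<le> T \<Longrightarrow> a \<le> b \<Longrightarrow>
         h t xa (vupd xc i a) v (\<delta> t) $ k \<le> h t xa (vupd xc i b) v (\<delta> t) $ k"
    and c_mono: "\<And>\<delta> j x u t i a b. j \<le> J \<Longrightarrow> t \<le> T \<Longrightarrow> a \<le> b \<Longrightarrow>
         c j (traj_upd_cvx x t i a) u \<delta> \<le> c j (traj_upd_cvx x t i b) u \<delta>"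
  shows "convex_system T J f0 A B w h c"
  unfolding convex_system_def seq_convex_def
proof (intro allI impI)
  fix \<delta> :: "nat \<Rightarrow> 'd" and j :: nat and u v :: "nat \<Rightarrow> real^'m" and \<theta> :: real
  assume j: "j \<le> J" and th0: "0 \<le> \<theta>" and th1: "\<theta> \<le> 1"
  let ?D = "\<lambda>u. dyn f0 A B w h u \<delta>"
  let ?uv = "seq_comb \<theta> u v"
  have aff: "fst (?D ?uv t) = \<theta> *\<^sub>R fst (?D u t) + (1 - \<theta>) *\<^sub>R fst (?D v t)" for t
  proof (induction t)
    case 0
    then show ?case by (simp add: algebra_simps)
  next
    case (Suc t)
    have e: "?uv t = \<theta> *\<^sub>R u t + (1 - \<theta>) *\<^sub>R v t" by (simp add: seq_comb_def)
    show ?case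
      by (simp only: dyn.simps Let_def fst_conv Suc.IH e) (simp add: algebra_simps)
  qed
  have cvx: "t \<le> T \<Longrightarrow> snd (?D ?uv t) $ k \<le> (\<theta> *\<^sub>R snd (?D u t) + (1 - \<theta>) *\<^sub>R snd (?D v t)) $ k"
    for t k
  proof (induction t arbitrary: k)
    case 0
    then show ?case by (simp add: algebra_simps)
  next
    case (Suc t)
    have t1: "1 \<le> Suc t" and tT: "Suc t \<le> T" using Suc by auto
    let ?xa = "fst (?D ?uv t)"
    let ?zc = "\<theta> *\<^sub>R snd (?D u t) + (1 - \<theta>) *\<^sub>R snd (?D v t)"
    let ?ds = "\<delta> (Suc t)"
    have "h (Suc t) ?xa (snd (?D ?uv t)) (?uv t) ?ds $ k \<le> h (Suc t) ?xa ?zc (?uv t) ?ds $ k"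
      by (rule vec_mono[where f = "\<lambda>z. h (Suc t) ?xa z (?uv t) ?ds $ k"])
         (use h_mono[OF t1 tT] Suc in auto)
    also have "\<dots> \<le> \<theta> * h (Suc t) (fst (?D u t)) (snd (?D u t)) (u t) ?ds $ k
                  + (1 - \<theta>) * h (Suc t) (fst (?D v t)) (snd (?D v t)) (v t) ?ds $ k"
    proof -
      have "(\<lambda>(xa, xc, vv). h (Suc t) xa xc vv (\<delta> (Suc t)) $ k)
              ((1 - (1 - \<theta>)) *\<^sub>R (fst (?D u t), snd (?D u t), u t)
               + (1 - \<theta>) *\<^sub>R (fst (?D v t), snd (?D v t), v t))
            \<le> (1 - (1 - \<theta>)) * (\<lambda>(xa, xc, vv). h (Suc t) xa xc vv (\<delta> (Suc t)) $ k) (fst (?D u t), snd (?D u t), u t)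
              + (1 - \<theta>) * (\<lambda>(xa, xc, vv). h (Suc t) xa xc vv (\<delta> (Suc t)) $ k) (fst (?D v t), snd (?D v t), v t)"
        by (rule convex_onD[OF h_convex[OF t1 tT]]) (use th0 th1 in auto)
      moreover have "?uv t = \<theta> *\<^sub>R u t + (1 - \<theta>) *\<^sub>R v t" by (simp add: seq_comb_def)
      ultimately show ?thesis by (simp add: aff[of t])
    qed
    finally show ?case by (simp add: Let_def)
  qed
  have "c j (phi T f0 A B w h ?uv \<delta>) ?uv \<delta> \<le> c j (seq_comb \<theta> (phi T f0 A B w h u \<delta>) (phi T f0 A B w h v \<delta>)) ?uv \<delta>"
    by (rule traj_mono[where g = "\<lambda>x. c j x ?uv \<delta>" and T = T])
       (use c_mono[OF j] aff cvx in \<open>auto simp: phi_def seq_comb_def\<close>)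
  also have "\<dots> \<le> \<theta> * c j (phi T f0 A B w h u \<delta>) u \<delta> + (1 - \<theta>) * c j (phi T f0 A B w h v \<delta>) v \<delta>"
    using c_convex[OF j] th0 th1 unfolding seq_convex2_def by blast
  finally show "c j (phi T f0 A B w h ?uv \<delta>) ?uv \<delta> \<le> \<theta> * c j (phi T f0 A B w h u \<delta>) u \<delta> + (1 - \<theta>) * c j (phi T f0 A B w h v \<delta>) v \<delta>" .
qed

end
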